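(* Let $(X,\tau)$ and $(Y,\sigma)$ be fuzzifying topological spaces and $f:X\to Y$ surjective. Then $$\max\big(0,\ L_PC(X,\tau)+I_P(f)+O_P(f)-2\big)\le L_PC(Y,\sigma),$$ i.e. $\vDash L_PC(X,\tau)\otimes I_P(f)\otimes O_P(f)\to L_PC(Y,\sigma)$.
   Context: Łukasiewicz: $[\varphi\otimes\psi]=\max(0,[\varphi]+[\psi]-1)$, $[\varphi\to\psi]=\min(1,1-[\varphi]+[\psi])$. A fuzzifying topology on $Z$ is $\tau:P(Z)\to[0,1]$ with $\tau(Z)=1$, $\tau(A\cap B)\ge\min$, $\tau(\bigcup A_\lambda)\ge\inf\tau(A_\lambda)$. $N_x(A)=\sup_{x\in B\subseteq A}\tau(B)$; $Cl(A)(x)=1-N_x(Z\setminus A)$; for $\mu:Z\to[0,1]$, $Int(\mu)(x)=\sup_{x\in B}\min(\tau(B),\inf_{y\in B}\mu(y))$; pre-open degrees $\tau_P(A)=\inf_{x\in A}Int(Cl(A))(x)$ (similarly $\sigma_P$ on $Y$); $N^P_x(A)=\sup_{x\in B\subseteq A}\tau_P(B)$. For $G\subseteq Z$: $(\tau_P/G)(B)=\sup\{\tau_P(V):V\cap G=B\}$. Compactness degree of $G$ w.r.t. $\eta:P(G)\to[0,1]$: with $K(\Re,G)=\inf_{x\in G}\sup_{B\ni x}\Re(B)$, $[\Re\subseteq\eta]=\inf_B\min(1,1-\Re(B)+\eta(B))$, $\wp\le\Re$ pointwise, $FF(\wp)=1-\inf\{\delta\in[0,1]:\{B:\wp(B)>\delta\}\text{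 finite}\}$, $\Gamma(G,\eta)=\inf_{\Re}\min\big(1,1-\max(0,K(\Re,G)+[\Re\subseteq\eta]-1)+\sup_{\wp\le\Re}\max(0,K(\wp,G)+FF(\wp)-1)\big)$. Locally strong compactness $L_PC(Z,\tau)=\inf_{x\in Z}\sup_{B\subseteq Z}\max(0,N^P_x(B)+\Gamma(B,\tau_P/B)-1)$. Pre-irresoluteness $I_P(f)=\inf_{B\subseteq Y}\min(1,1-\sigma_P(B)+\tau_P(f^{-1}(B)))$; pre-openness $O_P(f)=\inf_{U\subseteq X}\min(1,1-\tau_P(U)+\sigma_P(f(U)))$. *)

theory Defs
  imports Main "HOL-Library.FuncSet" Complex_Main
begin

text \<open>Truth values are reals in [0,1]. Suprema/infima of subsets of [0,1],
  with the [0,1]-lattice conventions sup of empty = 0, inf of empty = 1.\<close>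

definition supI :: "real set \<Rightarrow> real" where
  "supI S = (if S = {} then 0 else Sup S)"

definition infI :: "real set \<Rightarrow> real" where
  "infI S = (if S = {} then 1 else Inf S)"

definition luk_and :: "real \<Rightarrow> real \<Rightarrow> real" where
  "luk_and a b = max 0 (a + b - 1)"

definition luk_imp :: "real \<Rightarrow> real \<Rightarrow> real" where
  "luk_imp a b = min 1 (1 - a + b)"

definition fuzzifying_topology :: "('a set \<Rightarrow> real) \<Rightarrow> bool" where
  "fuzzifying_topology \<tau> \<longleftrightarrow>
     (\<forall>A. 0 \<le> \<tau> A \<and> \<tau> A \<le> 1) \<and>
     \<tau> UNIV = 1 \<and>
     (\<forall>A B. \<tau> (A \<inter> B) \<ge> min (\<tau> A) (\<tau> B)) \<and>
     (\<forall>F. \<tau> (\<Union>F) \<ge> infI (\<tau> ` F))"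

definition fnbhd :: "('a set \<Rightarrow> real) \<Rightarrow> 'a \<Rightarrow> 'a set \<Rightarrow> real" where
  "fnbhd \<tau> x A = supI {\<tau> B | B. x \<in> B \<and> B \<subseteq> A}"

definition fcl :: "('a set \<Rightarrow> real) \<Rightarrow> 'a set \<Rightarrow> 'a \<Rightarrow> real" where
  "fcl \<tau> A x = 1 - fnbhd \<tau> x (- A)"

definition fint :: "('a set \<Rightarrow> real) \<Rightarrow> ('a \<Rightarrow> real) \<Rightarrow> 'a \<Rightarrow> real" where
  "fint \<tau> \<mu> x = supI {min (\<tau> B) (infI (\<mu> ` B)) | B. x \<in> B}"

definition preopen :: "('a set \<Rightarrow> real) \<Rightarrow> 'a set \<Rightarrow> real" where
  "preopen \<tau> A = infI ((\<lambda>x. fint \<tau> (fcl \<tau> A) x) ` A)"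

definition pnbhd :: "('a set \<Rightarrow> real) \<Rightarrow> 'a \<Rightarrow> 'a set \<Rightarrow> real" where
  "pnbhd \<tau> x A = supI {preopen \<tau> B | B. x \<in> B \<and> B \<subseteq> A}"

text \<open>Subspace family (tau_P / G)(B), meaningful for B \<subseteq> G.\<close>
definition subsp :: "('a set \<Rightarrow> real) \<Rightarrow> 'a set \<Rightarrow> 'a set \<Rightarrow> real" where
  "subsp \<eta> G B = supI {\<eta> V | V. V \<inter> G = B}"

text \<open>Fuzzy families on P(G): [0,1]-valued functions on subsets of G,
  canonically extended by 0 outside P(G).\<close>
definition ffam :: "'a set \<Rightarrow> ('a set \<Rightarrow> real) set" where
  "ffam G = {R. (\<forall>B. 0 \<le> R B \<and> R B \<le> 1) \<and> (\<forall>B. \<not> B \<subseteq> G \<longrightarrow> R B = 0)}"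

definition Kcov :: "('a set \<Rightarrow> real) \<Rightarrow> 'a set \<Rightarrow> real" where
  "Kcov R G = infI ((\<lambda>x. supI {R B | B. B \<subseteq> G \<and> x \<in> B}) ` G)"

definition fsub :: "('a set \<Rightarrow> real) \<Rightarrow> ('a set \<Rightarrow> real) \<Rightarrow> 'a set \<Rightarrow> real" where
  "fsub R \<eta> G = infI {luk_imp (R B) (\<eta> B) | B. B \<subseteq> G}"

definition FF :: "('a set \<Rightarrow> real) \<Rightarrow> 'a set \<Rightarrow> real" where
  "FF P G = 1 - infI {\<delta>. 0 \<le> \<delta> \<and> \<delta> \<le> 1 \<and> finite {B. B \<subseteq> G \<and> P B > \<delta>}}"

definition Gamma :: "'a set \<Rightarrow> ('a set \<Rightarrow> real) \<Rightarrow> real" where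
  "Gamma G \<eta> = infI {luk_imp (luk_and (Kcov R G) (fsub R \<eta> G))
                        (supI {luk_and (Kcov P G) (FF P G) | P. P \<in> ffam G \<and> (\<forall>B. P B \<le> R B)})
                     | R. R \<in> ffam G}"

definition LPC :: "('a set \<Rightarrow> real) \<Rightarrow> real" where
  "LPC \<tau> = infI (range (\<lambda>x. supI {luk_and (pnbhd \<tau> x B) (Gamma B (subsp (preopen \<tau>) B)) | B. True}))"

definition pre_irresolute :: "('a set \<Rightarrow> real) \<Rightarrow> ('b set \<Rightarrow> real) \<Rightarrow> ('a \<Rightarrow> 'b) \<Rightarrow> real" where
  "pre_irresolute \<tau> \<sigma> f = infI {luk_imp (preopen \<sigma> B) (preopen \<tau> (f -` B)) | B. True}"

definition pre_open_map :: "('a set \<Rightarrow> real) \<Rightarrow> ('b set \<Rightarrow> real) \<Rightarrow> ('a \<Rightarrow> 'b) \<Rightarrow> real" where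
  "pre_open_map \<tau> \<sigma> f = infI {luk_imp (preopen \<tau> U) (preopen \<sigma> (f ` U)) | U. True}"

end

theory Submission
  imports Defs
begin


lemma supI_ge: "s \<in> S \<Longrightarrow> \<forall>t\<in>S. t \<le> 1 \<Longrightarrow> s \<le> supI S"
  unfolding supI_def by (auto intro!: cSup_upper bdd_aboveI[where M=1])

lemma supI_le: "\<forall>s\<in>S. s \<le> c \<Longrightarrow> 0 \<le> c \<Longrightarrow> supI S \<le> c"
  unfolding supI_def by (auto intro!: cSup_least)

lemma supI_unit: "\<forall>s\<in>S. 0 \<le> s \<and> s \<le> 1 \<Longrightarrow> 0 \<le> supI S \<and> supI S \<le> 1"
proof -
  assume h: "\<forall>s\<in>S. 0 \<le> s \<and> s \<le> 1"
  show ?thesis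
  proof (cases "S = {}")
    case True then show ?thesis by (simp add: supI_def)
  next
    case False
    then obtain s where "s \<in> S" by blast
    then have "s \<le> supI S" using h supI_ge by blast
    then show ?thesis using h \<open>s\<in>S\<close> supI_le[of S 1] by force
  qed
qed

lemma infI_le: "s \<in> S \<Longrightarrow> \<forall>t\<in>S. 0 \<le> t \<Longrightarrow> infI S \<le> s"
  unfolding infI_def by (auto intro!: cInf_lower bdd_belowI[where m=0])

lemma le_infI: "\<forall>s\<in>S. c \<le> s \<Longrightarrow> c \<le> 1 \<Longrightarrow> c \<le> infI S"
  unfolding infI_def by (auto intro!: cInf_greatest)

lemma infI_unit: "\<forall>s\<in>S. 0 \<le> s \<and> s \<le> 1 \<Longrightarrow> 0 \<le> infI S \<and> infI S \<le> 1"
proof -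
  assume h: "\<forall>s\<in>S. 0 \<le> s \<and> s \<le> 1"
  show ?thesis
  proof (cases "S = {}")
    case True then show ?thesis by (simp add: infI_def)
  next
    case False
    then obtain s where "s \<in> S" by blast
    then have "infI S \<le> s" using h infI_le by blast
    then show ?thesis using h \<open>s\<in>S\<close> le_infI[of S 0] by force
  qed
qed

lemma luk_and_unit: "0 \<le> a \<Longrightarrow> a \<le> 1 \<Longrightarrow> 0 \<le> b \<Longrightarrow> b \<le> 1 \<Longrightarrow> 0 \<le> luk_and a b \<and> luk_and a b \<le> 1"
  by (simp add: luk_and_def)
lemma luk_imp_unit: "0 \<le> a \<Longrightarrow> a \<le> 1 \<Longrightarrow> 0 \<le> b \<Longrightarrow> b \<le> 1 \<Longrightarrow> 0 \<le> luk_imp a b \<and> luk_imp a b \<le> 1"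
  by (simp add: luk_imp_def)

lemma luk_and_supI:
  assumes S: "\<forall>a\<in>S. 0 \<le> a \<and> a \<le> 1" and H: "\<forall>a\<in>S. luk_and a c \<le> T" and T: "0 \<le> T" and c: "c \<le> 1"
  shows "luk_and (supI S) c \<le> T"
proof (cases "S = {}")
  case True then show ?thesis using T c by (simp add: supI_def luk_and_def)
next
  case False
  show ?thesis
  proof (rule ccontr)
    assume "\<not> ?thesis"
    then have "T + 1 - c < Sup S" using False T by (simp add: supI_def luk_and_def)
    moreover have "bdd_above S" using S by (auto intro!: bdd_aboveI[where M=1])
    ultimately obtain a where "a \<in> S" "T + 1 - c < a" using False less_cSup_iff by blast
    then show False using H by (auto simp: luk_and_def)
  qed
qed

lemma supI_mono':
  assumes "\<forall>s\<in>S. \<exists>t\<in>T. s \<le> t" "\<forall>t\<in>T. 0 \<le> t \<and> t \<le> 1"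
  shows "supI S \<le> supI T"
proof -
  have "0 \<le> supI T" using supI_unit assms(2) by blast
  moreover have "\<forall>s\<in>S. s \<le> supI T" using assms supI_ge by (meson order_trans)
  ultimately show ?thesis using supI_le by blast
qed

lemma ffam_unit: "R \<in> ffam G \<Longrightarrow> 0 \<le> R B \<and> R B \<le> 1" by (simp add: ffam_def)
lemma ffam_zero: "R \<in> ffam G \<Longrightarrow> \<not> B \<subseteq> G \<Longrightarrow> R B = 0" by (simp add: ffam_def)

lemma fnbhd_unit: "(\<And>A. 0 \<le> t A \<and> t A \<le> 1) \<Longrightarrow> 0 \<le> fnbhd t x A \<and> fnbhd t x A \<le> 1"
  unfolding fnbhd_def by (rule supI_unit) auto
lemma fcl_unit: "(\<And>A. 0 \<le> t A \<and> t A \<le> 1) \<Longrightarrow> 0 \<le> fcl t A x \<and> fcl t A x \<le> 1"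
  unfolding fcl_def using fnbhd_unit[of t x "-A"] by auto
lemma fint_unit: "(\<And>A. 0 \<le> t A \<and> t A \<le> 1) \<Longrightarrow> (\<And>x. 0 \<le> m x \<and> m x \<le> 1) \<Longrightarrow> 0 \<le> fint t m x \<and> fint t m x \<le> 1"
  unfolding fint_def
  apply (rule supI_unit)
  apply clarify
  subgoal for s B using infI_unit[of "m ` B"] by (auto simp: min_def)
  done
lemma preopen_unit: "(\<And>A. 0 \<le> t A \<and> t A \<le> 1) \<Longrightarrow> 0 \<le> preopen t A \<and> preopen t A \<le> 1"
  unfolding preopen_def by (rule infI_unit) (auto intro!: fint_unit fcl_unit)
lemma pnbhd_unit: "(\<And>A. 0 \<le> t A \<and> t A \<le> 1) \<Longrightarrow> 0 \<le> pnbhd t x A \<and> pnbhd t x A \<le> 1"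
  unfolding pnbhd_def by (rule supI_unit) (use preopen_unit in blast)
lemma subsp_unit: "(\<And>A. 0 \<le> t A \<and> t A \<le> 1) \<Longrightarrow> 0 \<le> subsp t G A \<and> subsp t G A \<le> 1"
  unfolding subsp_def by (rule supI_unit) auto
lemma Kcov_unit: "R \<in> ffam G \<Longrightarrow> 0 \<le> Kcov R G \<and> Kcov R G \<le> 1"
  unfolding Kcov_def by (rule infI_unit) (auto intro!: supI_unit dest: ffam_unit)
lemma fsub_unit: assumes "(\<And>A. 0 \<le> R A \<and> R A \<le> 1)" "(\<And>A. 0 \<le> t A \<and> t A \<le> 1)" shows "0 \<le> fsub R t G \<and> fsub R t G \<le> 1"
  unfolding fsub_def apply (rule infI_unit) apply clarify
  subgoal for s B using assms[of B] luk_imp_unit[of "R B" "t B"] by auto done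
lemma FF_unit: "0 \<le> FF P G \<and> FF P G \<le> 1"
  unfolding FF_def using infI_unit[of "{\<delta>. 0 \<le> \<delta> \<and> \<delta> \<le> 1 \<and> finite {B. B \<subseteq> G \<and> P B > \<delta>}}"] by auto
lemma Gamma_unit: assumes "(\<And>A. 0 \<le> t A \<and> t A \<le> 1)" shows "0 \<le> Gamma G t \<and> Gamma G t \<le> 1"
  unfolding Gamma_def
  apply (rule infI_unit)
  apply clarify
  subgoal for s R
  proof -
    assume R: "R \<in> ffam G"
    have a: "0 \<le> luk_and (Kcov R G) (fsub R t G) \<and> luk_and (Kcov R G) (fsub R t G) \<le> 1"
      using Kcov_unit[OF R] fsub_unit[of R t G] assms ffam_unit[OF R] luk_and_unit by meson
    have b: "0 \<le> supI {luk_and (Kcov P G) (FF P G) |P. P \<in> ffam G \<and> (\<forall>B. P B \<le> R B)} \<and> supI {luk_and (Kcov P G) (FF P G) |P. P \<in> ffam G \<and> (\<forall>B. P B \<le> R B)} \<le> 1"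
      apply (rule supI_unit) using Kcov_unit FF_unit luk_and_unit by blast
    show ?thesis using a b luk_imp_unit by blast
  qed
  done


lemma supI_nonneg: "(\<And>s. s \<in> S \<Longrightarrow> 0 \<le> s \<and> s \<le> 1) \<Longrightarrow> 0 \<le> supI S"
  using supI_unit by blast

lemma KF_unit: "P \<in> ffam G \<Longrightarrow> 0 \<le> luk_and (Kcov P G) (FF P G) \<and> luk_and (Kcov P G) (FF P G) \<le> 1"
  using Kcov_unit[of P G] FF_unit[of P G] by (simp add: luk_and_def)

lemma final_arith:
  fixes g I K K' s s' S S' :: real
  assumes "g \<le> min 1 (1 - max 0 (K'+s'-1) + S')" "K \<le> K'" "max 0 (s+I-1) \<le> s'" "S' \<le> S"
    "0\<le>g" "g \<le> 1" "0 \<le> I" "I \<le> 1" "0 \<le> K" "K \<le> 1" "0 \<le> s" "s \<le> 1" "0 \<le> S"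
  shows "max 0 (g+I-1) \<le> min 1 (1 - max 0 (K+s-1) + S)"
  using assms by (simp add: max_def min_def split: if_splits)

lemma Gamma_image:
  fixes e1 :: "'a set \<Rightarrow> real" and e2 :: "'b set \<Rightarrow> real" and f :: "'a \<Rightarrow> 'b"
  assumes e1: "\<And>A. 0 \<le> e1 A \<and> e1 A \<le> 1" and e2: "\<And>A. 0 \<le> e2 A \<and> e2 A \<le> 1"
  and I: "0 \<le> I" "I \<le> 1" and irr: "\<And>V. luk_and (e2 V) I \<le> e1 (f -` V)"
  shows "luk_and (Gamma B (subsp e1 B)) I \<le> Gamma (f ` B) (subsp e2 (f ` B))"
proof -
  let ?g = "Gamma B (subsp e1 B)"
  let ?h1 = "subsp e1 B" and ?h2 = "subsp e2 (f ` B)"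
  have h1: "\<And>A. 0 \<le> ?h1 A \<and> ?h1 A \<le> 1" using subsp_unit e1 by blast
  have h2: "\<And>A. 0 \<le> ?h2 A \<and> ?h2 A \<le> 1" using subsp_unit e2 by blast
  have g: "0 \<le> ?g \<and> ?g \<le> 1" using Gamma_unit h1 by blast
  have main: "luk_and ?g I \<le> luk_imp (luk_and (Kcov R (f`B)) (fsub R ?h2 (f`B)))
     (supI {luk_and (Kcov P (f`B)) (FF P (f`B)) |P. P \<in> ffam (f`B) \<and> (\<forall>D. P D \<le> R D)})"
    if R: "R \<in> ffam (f`B)" for R
  proof -
    define R' where "R' = (\<lambda>A. supI {R D | D. f -` D \<inter> B = A})"
    have R'u: "0 \<le> R' A \<and> R' A \<le> 1" for A
      unfolding R'_def by (rule supI_unit) (use ffam_unit[OF R] in blast)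
    have R'f: "R' \<in> ffam B"
      unfolding ffam_def using R'u by (auto simp: R'_def supI_def)
    have R'ge: "R D \<le> R' (f -` D \<inter> B)" for D
      unfolding R'_def by (rule supI_ge) (use ffam_unit[OF R] in auto)
    let ?K = "Kcov R (f`B)" and ?K' = "Kcov R' B"
    let ?s = "fsub R ?h2 (f`B)" and ?s' = "fsub R' ?h1 B"
    let ?S = "supI {luk_and (Kcov P (f`B)) (FF P (f`B)) |P. P \<in> ffam (f`B) \<and> (\<forall>D. P D \<le> R D)}"
    let ?S' = "supI {luk_and (Kcov P B) (FF P B) |P. P \<in> ffam B \<and> (\<forall>D. P D \<le> R' D)}"
    have Ku: "0 \<le> ?K \<and> ?K \<le> 1" using Kcov_unit[OF R] .
    have su: "0 \<le> ?s \<and> ?s \<le> 1" using fsub_unit ffam_unit[OF R] h2 by blast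
    have Su: "0 \<le> ?S \<and> ?S \<le> 1" by (rule supI_unit) (use KF_unit in blast)
    have gle: "?g \<le> luk_imp (luk_and ?K' ?s') ?S'"
      unfolding Gamma_def
    proof (rule infI_le)
      show "luk_imp (luk_and ?K' ?s') ?S' \<in> {luk_imp (luk_and (Kcov R B) (fsub R (subsp e1 B) B))
                (supI {luk_and (Kcov P B) (FF P B) |P. P \<in> ffam B \<and> (\<forall>B. P B \<le> R B)}) | R. R \<in> ffam B}"
        using R'f by blast
      show "\<forall>t\<in>{luk_imp (luk_and (Kcov R B) (fsub R (subsp e1 B) B))
                (supI {luk_and (Kcov P B) (FF P B) |P. P \<in> ffam B \<and> (\<forall>B. P B \<le> R B)}) | R. R \<in> ffam B}. 0 \<le> t"
      proof clarify
        fix Q assume Q: "Q \<in> ffam B"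
        have a: "0 \<le> luk_and (Kcov Q B) (fsub Q ?h1 B) \<and> luk_and (Kcov Q B) (fsub Q ?h1 B) \<le> 1"
          using Kcov_unit[OF Q] fsub_unit[of Q ?h1 B] h1 ffam_unit[OF Q] luk_and_unit by meson
        have b: "0 \<le> supI {luk_and (Kcov P B) (FF P B) |P. P \<in> ffam B \<and> (\<forall>D. P D \<le> Q D)}"
          by (rule supI_nonneg) (use KF_unit in blast)
        show "0 \<le> luk_imp (luk_and (Kcov Q B) (fsub Q ?h1 B))
                (supI {luk_and (Kcov P B) (FF P B) |P. P \<in> ffam B \<and> (\<forall>D. P D \<le> Q D)})"
          using a b by (simp add: luk_imp_def)
      qed
    qed
    have K: "?K \<le> ?K'"
      unfolding Kcov_def[of R' B]
    proof (rule le_infI)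
      show "?K \<le> 1" using Ku by simp
      show "\<forall>s\<in>(\<lambda>x. supI {R' Ba |Ba. Ba \<subseteq> B \<and> x \<in> Ba}) ` B. ?K \<le> s"
      proof
        fix s assume "s \<in> (\<lambda>x. supI {R' Ba |Ba. Ba \<subseteq> B \<and> x \<in> Ba}) ` B"
        then obtain x where x: "x \<in> B" and s: "s = supI {R' Ba |Ba. Ba \<subseteq> B \<and> x \<in> Ba}" by blast
        have "?K \<le> supI {R D | D. D \<subseteq> f`B \<and> f x \<in> D}"
          unfolding Kcov_def
          by (rule infI_le) (use x in auto, auto intro!: supI_nonneg simp: ffam_unit[OF R])
        also have "\<dots> \<le> s" unfolding s
        proof (rule supI_mono')
          show "\<forall>t\<in>{R' Ba |Ba. Ba \<subseteq> B \<and> x \<in> Ba}. 0 \<le> t \<and> t \<le> 1" using R'u by blast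
          show "\<forall>sa\<in>{R D |D. D \<subseteq> f ` B \<and> f x \<in> D}. \<exists>t\<in>{R' Ba |Ba. Ba \<subseteq> B \<and> x \<in> Ba}. sa \<le> t"
          proof clarify
            fix D assume "D \<subseteq> f`B" "f x \<in> D"
            then show "\<exists>t\<in>{R' Ba |Ba. Ba \<subseteq> B \<and> x \<in> Ba}. R D \<le> t"
              using R'ge[of D] x by blast
          qed
        qed
        finally show "?K \<le> s" .
      qed
    qed
    have s: "luk_and ?s I \<le> ?s'"
      unfolding fsub_def[of R' ?h1 B]
    proof (rule le_infI)
      show "luk_and ?s I \<le> 1" using su I by (simp add: luk_and_def)
      show "\<forall>t\<in>{luk_imp (R' A) (?h1 A) |A. A \<subseteq> B}. luk_and ?s I \<le> t"
      proof clarify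
        fix A assume A: "A \<subseteq> B"
        have "R' A \<le> 2 - ?s - I + ?h1 A"
          unfolding R'_def
        proof (rule supI_le)
          show "0 \<le> 2 - ?s - I + ?h1 A" using su I h1[of A] by linarith
          show "\<forall>t\<in>{R D |D. f -` D \<inter> B = A}. t \<le> 2 - ?s - I + ?h1 A"
          proof (intro ballI)
            fix t assume "t \<in> {R D |D. f -` D \<inter> B = A}"
            then obtain D where DA: "f -` D \<inter> B = A" and tD: "t = R D" by blast
            show "t \<le> 2 - ?s - I + ?h1 A"
            proof (cases "D \<subseteq> f`B")
              case False
              then show ?thesis using tD ffam_zero[OF R False] su I h1[of A] by linarith
            next
              case True
              have "?s \<le> luk_imp (R D) (?h2 D)"
                unfolding fsub_def
                by (rule infI_le) (use True in auto, auto simp: luk_imp_def ffam_unit[OF R] h2)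
              then have 1: "?s \<le> 1 - R D + ?h2 D" by (simp add: luk_imp_def)
              have "luk_and (?h2 D) I \<le> ?h1 A"
                unfolding subsp_def[of e2]
              proof (rule luk_and_supI)
                show "\<forall>a\<in>{e2 V |V. V \<inter> f ` B = D}. 0 \<le> a \<and> a \<le> 1" using e2 by blast
                show "0 \<le> ?h1 A" using h1 by blast
                show "I \<le> 1" by fact
                show "\<forall>a\<in>{e2 V |V. V \<inter> f ` B = D}. luk_and a I \<le> ?h1 A"
                proof clarify
                  fix V assume V: "D = V \<inter> f ` B"
                  have "f -` V \<inter> B = A" using V DA by auto
                  then have "e1 (f -` V) \<le> ?h1 A"
                    unfolding subsp_def by (intro supI_ge) (use e1 in auto)
                  then show "luk_and (e2 V) I \<le> ?h1 A" using irr[of V] by linarith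
                qed
              qed
              then have 2: "?h2 D + I - 1 \<le> ?h1 A" by (simp add: luk_and_def)
              show ?thesis using tD 1 2 by linarith
            qed
          qed
        qed
        then show "luk_and ?s I \<le> luk_imp (R' A) (?h1 A)"
          using su I R'u[of A] h1[of A] by (simp add: luk_and_def luk_imp_def)
      qed
    qed
    have S: "?S' \<le> ?S"
    proof (rule supI_mono')
      show "\<forall>t\<in>{luk_and (Kcov P (f`B)) (FF P (f`B)) |P. P \<in> ffam (f`B) \<and> (\<forall>D. P D \<le> R D)}. 0 \<le> t \<and> t \<le> 1"
        using KF_unit by blast
      show "\<forall>s\<in>{luk_and (Kcov P B) (FF P B) |P. P \<in> ffam B \<and> (\<forall>D. P D \<le> R' D)}.
          \<exists>t\<in>{luk_and (Kcov P (f`B)) (FF P (f`B)) |P. P \<in> ffam (f`B) \<and> (\<forall>D. P D \<le> R D)}. s \<le> t"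
      proof clarify
        fix P' assume P': "P' \<in> ffam B" and P'le: "\<forall>D. P' D \<le> R' D"
        define P where "P = (\<lambda>D. if D \<subseteq> f`B then min (R D) (P' (f -` D \<inter> B)) else 0)"
        have Pf: "P \<in> ffam (f`B)" unfolding ffam_def P_def
          using ffam_unit[OF R] ffam_unit[OF P'] by (auto simp: min_def)
        have Ple: "\<forall>D. P D \<le> R D" unfolding P_def using ffam_unit[OF R] by auto
        have KP: "Kcov P' B \<le> Kcov P (f`B)"
          unfolding Kcov_def[of P]
        proof (rule le_infI)
          show "Kcov P' B \<le> 1" using Kcov_unit[OF P'] by simp
          show "\<forall>s\<in>(\<lambda>x. supI {P Ba |Ba. Ba \<subseteq> f ` B \<and> x \<in> Ba}) ` f ` B. Kcov P' B \<le> s"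
          proof clarify
            fix x assume x: "x \<in> B"
            let ?T = "supI {P Ba |Ba. Ba \<subseteq> f ` B \<and> f x \<in> Ba}"
            have Tu: "0 \<le> ?T \<and> ?T \<le> 1" by (rule supI_unit) (use ffam_unit[OF Pf] in blast)
            have "Kcov P' B \<le> supI {P' A | A. A \<subseteq> B \<and> x \<in> A}"
              unfolding Kcov_def
              by (rule infI_le) (use x in auto, auto intro!: supI_nonneg simp: ffam_unit[OF P'])
            also have "\<dots> \<le> ?T"
            proof (rule supI_le)
              show "0 \<le> ?T" using Tu by simp
              show "\<forall>s\<in>{P' A |A. A \<subseteq> B \<and> x \<in> A}. s \<le> ?T"
              proof clarify
                fix A assume A: "A \<subseteq> B" "x \<in> A"
                show "P' A \<le> ?T"
                proof (rule ccontr)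
                  assume nle: "\<not> P' A \<le> ?T"
                  have "?T < R' A" using nle P'le by (meson not_le order_less_le_trans)
                  have ne: "{R D | D. f -` D \<inter> B = A} \<noteq> {}"
                  proof
                    assume "{R D | D. f -` D \<inter> B = A} = {}"
                    then have "R' A = 0" by (simp add: R'_def supI_def)
                    then show False using \<open>?T < R' A\<close> Tu by linarith
                  qed
                  have bdd: "bdd_above {R D | D. f -` D \<inter> B = A}"
                    using ffam_unit[OF R] by (auto intro!: bdd_aboveI[where M=1])
                  have "R' A = Sup {R D | D. f -` D \<inter> B = A}"
                    unfolding R'_def supI_def using ne by (simp only: if_False)
                  with \<open>?T < R' A\<close> have "?T < Sup {R D | D. f -` D \<inter> B = A}"
                    by simp
                  then obtain D where D: "f -` D \<inter> B = A" "?T < R D"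
                    using less_cSup_iff[OF ne bdd] by blast
                  have Dsub: "D \<subseteq> f`B"
                  proof (rule ccontr)
                    assume "\<not> D \<subseteq> f`B"
                    then have "R D = 0" using ffam_zero[OF R] by blast
                    then show False using D(2) Tu by linarith
                  qed
                  have fxD: "f x \<in> D" using A D(1) by auto
                  have "P D \<le> ?T"
                  proof (rule supI_ge)
                    show "P D \<in> {P Ba |Ba. Ba \<subseteq> f ` B \<and> f x \<in> Ba}" using Dsub fxD by blast
                    show "\<forall>t\<in>{P Ba |Ba. Ba \<subseteq> f ` B \<and> f x \<in> Ba}. t \<le> 1" using ffam_unit[OF Pf] by blast
                  qed
                  moreover have "P D = min (R D) (P' A)" using Dsub D(1) by (simp add: P_def)
                  ultimately show False using D(2) nle by linarith
                qed
              qed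
            qed
            finally show "Kcov P' B \<le> ?T" .
          qed
        qed
        have FP: "FF P' B \<le> FF P (f`B)"
        proof -
          let ?D1 = "{\<delta>. 0 \<le> \<delta> \<and> \<delta> \<le> 1 \<and> finite {A. A \<subseteq> B \<and> P' A > \<delta>}}"
          let ?D2 = "{\<delta>. 0 \<le> \<delta> \<and> \<delta> \<le> 1 \<and> finite {D. D \<subseteq> f`B \<and> P D > \<delta>}}"
          have sub: "?D1 \<subseteq> ?D2"
          proof clarify
            fix \<delta> :: real assume d: "0 \<le> \<delta>" "\<delta> \<le> 1" and fin: "finite {A. A \<subseteq> B \<and> P' A > \<delta>}"
            let ?g = "\<lambda>D. f -` D \<inter> B"
            have inj: "inj_on ?g {D. D \<subseteq> f`B \<and> P D > \<delta>}"
            proof (rule inj_onI)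
              fix D1 D2 assume "D1 \<in> {D. D \<subseteq> f`B \<and> P D > \<delta>}" "D2 \<in> {D. D \<subseteq> f`B \<and> P D > \<delta>}"
                "f -` D1 \<inter> B = f -` D2 \<inter> B"
              then have "f ` (f -` D1 \<inter> B) = f ` (f -` D2 \<inter> B)" "D1 \<subseteq> f`B" "D2 \<subseteq> f`B" by auto
              moreover have "\<And>D. D \<subseteq> f`B \<Longrightarrow> f ` (f -` D \<inter> B) = D" by auto
              ultimately show "D1 = D2" by metis
            qed
            have "?g ` {D. D \<subseteq> f`B \<and> P D > \<delta>} \<subseteq> {A. A \<subseteq> B \<and> P' A > \<delta>}"
              by (auto simp: P_def split: if_splits)
            then have "finite (?g ` {D. D \<subseteq> f`B \<and> P D > \<delta>})" using fin finite_subset by blast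
            then show "finite {D. D \<subseteq> f`B \<and> P D > \<delta>}" using finite_imageD inj by blast
          qed
          have "{A. A \<subseteq> B \<and> P' A > 1} = {}" using ffam_unit[OF P'] by (auto simp: not_less)
          then have "finite {A. A \<subseteq> B \<and> P' A > 1}" by (metis finite.emptyI)
          then have "1 \<in> ?D1" by simp
          then have ne: "?D1 \<noteq> {}" by blast
          have "infI ?D2 \<le> infI ?D1"
            unfolding infI_def using ne sub
            by (auto intro!: cInf_superset_mono bdd_belowI[where m=0])
          then show ?thesis unfolding FF_def by linarith
        qed
        have "luk_and (Kcov P' B) (FF P' B) \<le> luk_and (Kcov P (f`B)) (FF P (f`B))"
          using KP FP by (simp add: luk_and_def)
        then show "\<exists>t\<in>{luk_and (Kcov P (f`B)) (FF P (f`B)) |P. P \<in> ffam (f`B) \<and> (\<forall>D. P D \<le> R D)}.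
             luk_and (Kcov P' B) (FF P' B) \<le> t" using Pf Ple by blast
      qed
    qed
    show ?thesis using final_arith[of ?g ?K' ?s' ?S' ?K ?s I ?S] gle K s S g I Ku su Su
      unfolding luk_and_def luk_imp_def by linarith
  qed
  show ?thesis
    unfolding Gamma_def[of "f`B"]
  proof (rule le_infI)
    show "luk_and ?g I \<le> 1" using g I by (simp add: luk_and_def)
  qed (use main in blast)
qed



lemma arith2:
  fixes N Ov N' G I G' :: real
  assumes "luk_and N Ov \<le> N'" "luk_and G I \<le> G'" "0 \<le> N" "N \<le> 1" "0 \<le> Ov" "Ov \<le> 1"
    "0 \<le> G" "G \<le> 1" "0 \<le> I" "I \<le> 1" "0 \<le> N'" "0 \<le> G'"
  shows "luk_and (luk_and N G) (luk_and I Ov) \<le> luk_and N' G'"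
  using assms by (simp add: luk_and_def max_def split: if_splits)

lemma arith3:
  fixes L X I Ov :: real
  assumes "L \<le> X" "0 \<le> L" "X \<le> 1" "0 \<le> I" "I \<le> 1" "0 \<le> Ov" "Ov \<le> 1"
  shows "luk_and (luk_and L I) Ov \<le> luk_and X (luk_and I Ov)"
  using assms by (simp add: luk_and_def max_def split: if_splits)

lemma LPC_unit: "(\<And>A. 0 \<le> t A \<and> t A \<le> 1) \<Longrightarrow> 0 \<le> LPC t \<and> LPC t \<le> 1"
  unfolding LPC_def
  apply (rule infI_unit)
  apply clarify
  apply (rule supI_unit)
  apply clarify
  subgoal for s x v B
    using pnbhd_unit[of t x B] Gamma_unit[of "subsp (preopen t) B" B] subsp_unit[of "preopen t" B]
      preopen_unit[of t] luk_and_unit by meson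
  done

theorem theorem4p7:
  fixes \<tau> :: "'a set \<Rightarrow> real" and \<sigma> :: "'b set \<Rightarrow> real" and f :: "'a \<Rightarrow> 'b"
  assumes "fuzzifying_topology \<tau>" and "fuzzifying_topology \<sigma>" and "surj f"
  shows "luk_and (luk_and (LPC \<tau>) (pre_irresolute \<tau> \<sigma> f)) (pre_open_map \<tau> \<sigma> f) \<le> LPC \<sigma>"
proof -
  have ft: "\<And>A. 0 \<le> \<tau> A \<and> \<tau> A \<le> 1" using assms(1) by (simp add: fuzzifying_topology_def)
  have fs: "\<And>A. 0 \<le> \<sigma> A \<and> \<sigma> A \<le> 1" using assms(2) by (simp add: fuzzifying_topology_def)
  let ?I = "pre_irresolute \<tau> \<sigma> f" and ?O = "pre_open_map \<tau> \<sigma> f"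
  have tP: "\<And>A. 0 \<le> preopen \<tau> A \<and> preopen \<tau> A \<le> 1" using preopen_unit[where t="\<tau>", OF ft] by blast
  have sP: "\<And>A. 0 \<le> preopen \<sigma> A \<and> preopen \<sigma> A \<le> 1" using preopen_unit[where t="\<sigma>", OF fs] by blast
  have Iset: "\<forall>t\<in>{luk_imp (preopen \<sigma> B) (preopen \<tau> (f -` B)) | B. True}. 0 \<le> t \<and> t \<le> 1"
    using tP sP luk_imp_unit by blast
  have Oset: "\<forall>t\<in>{luk_imp (preopen \<tau> U) (preopen \<sigma> (f ` U)) | U. True}. 0 \<le> t \<and> t \<le> 1"
    using tP sP luk_imp_unit by blast
  have Iu: "0 \<le> ?I \<and> ?I \<le> 1" unfolding pre_irresolute_def by (rule infI_unit[OF Iset])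
  have Ou: "0 \<le> ?O \<and> ?O \<le> 1" unfolding pre_open_map_def by (rule infI_unit[OF Oset])
  have irr: "luk_and (preopen \<sigma> V) ?I \<le> preopen \<tau> (f -` V)" for V
  proof -
    have "?I \<le> luk_imp (preopen \<sigma> V) (preopen \<tau> (f -` V))"
      unfolding pre_irresolute_def by (rule infI_le) (use Iset in auto)
    then show ?thesis using tP[of "f -` V"] by (simp add: luk_and_def luk_imp_def)
  qed
  have opn: "luk_and (preopen \<tau> U) ?O \<le> preopen \<sigma> (f ` U)" for U
  proof -
    have "?O \<le> luk_imp (preopen \<tau> U) (preopen \<sigma> (f ` U))"
      unfolding pre_open_map_def by (rule infI_le) (use Oset in auto)
    then show ?thesis using sP[of "f ` U"] by (simp add: luk_and_def luk_imp_def)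
  qed
  have nb: "luk_and (pnbhd \<tau> x B) ?O \<le> pnbhd \<sigma> (f x) (f ` B)" for x B
    unfolding pnbhd_def[of \<tau>]
  proof (rule luk_and_supI)
    show "\<forall>a\<in>{preopen \<tau> Ba |Ba. x \<in> Ba \<and> Ba \<subseteq> B}. 0 \<le> a \<and> a \<le> 1" using tP by blast
    show "0 \<le> pnbhd \<sigma> (f x) (f ` B)" using pnbhd_unit[where t="\<sigma>", OF fs] by blast
    show "?O \<le> 1" using Ou by blast
    show "\<forall>a\<in>{preopen \<tau> Ba |Ba. x \<in> Ba \<and> Ba \<subseteq> B}. luk_and a ?O \<le> pnbhd \<sigma> (f x) (f ` B)"
    proof (intro ballI)
      fix a assume "a \<in> {preopen \<tau> Ba |Ba. x \<in> Ba \<and> Ba \<subseteq> B}"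
      then obtain C where C: "a = preopen \<tau> C" "x \<in> C" "C \<subseteq> B" by blast
      have "preopen \<sigma> (f ` C) \<le> pnbhd \<sigma> (f x) (f ` B)"
        unfolding pnbhd_def
      proof (rule supI_ge)
        show "preopen \<sigma> (f ` C) \<in> {preopen \<sigma> Ba |Ba. f x \<in> Ba \<and> Ba \<subseteq> f ` B}" using C by blast
        show "\<forall>t\<in>{preopen \<sigma> Ba |Ba. f x \<in> Ba \<and> Ba \<subseteq> f ` B}. t \<le> 1" using sP by blast
      qed
      then show "luk_and a ?O \<le> pnbhd \<sigma> (f x) (f ` B)" using opn[of C] C(1) by simp
    qed
  qed
  have gm: "luk_and (Gamma B (subsp (preopen \<tau>) B)) ?I \<le> Gamma (f`B) (subsp (preopen \<sigma>) (f`B))" for B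
    apply (rule Gamma_image) using tP sP Iu irr by auto
  have Lu: "0 \<le> LPC \<tau> \<and> LPC \<tau> \<le> 1" using LPC_unit[where t="\<tau>", OF ft] .
  show ?thesis
    unfolding LPC_def[of \<sigma>]
  proof (rule le_infI)
    show "luk_and (luk_and (LPC \<tau>) ?I) ?O \<le> 1" using Lu Iu Ou by (simp add: luk_and_def max_def)
    show "\<forall>s\<in>range (\<lambda>x. supI {luk_and (pnbhd \<sigma> x B) (Gamma B (subsp (preopen \<sigma>) B)) |B. True}).
            luk_and (luk_and (LPC \<tau>) ?I) ?O \<le> s"
    proof (intro ballI)
      fix s assume "s \<in> range (\<lambda>x. supI {luk_and (pnbhd \<sigma> x B) (Gamma B (subsp (preopen \<sigma>) B)) |B. True})"
      then obtain y where s: "s = supI {luk_and (pnbhd \<sigma> y B) (Gamma B (subsp (preopen \<sigma>) B)) |B. True}" by blast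
      obtain x where y: "y = f x" using assms(3) by (metis surj_def)
      let ?Sx = "{luk_and (pnbhd \<tau> x B) (Gamma B (subsp (preopen \<tau>) B)) |B. True}"
      let ?Sy = "{luk_and (pnbhd \<sigma> y B) (Gamma B (subsp (preopen \<sigma>) B)) |B. True}"
      have Sxu: "\<forall>a\<in>?Sx. 0 \<le> a \<and> a \<le> 1"
        using pnbhd_unit[where t="\<tau>", OF ft] Gamma_unit subsp_unit[where t="preopen \<tau>", OF tP] luk_and_unit by (smt (verit) mem_Collect_eq)
      have Syu: "\<forall>a\<in>?Sy. 0 \<le> a \<and> a \<le> 1"
        using pnbhd_unit[where t="\<sigma>", OF fs] Gamma_unit subsp_unit[where t="preopen \<sigma>", OF sP] luk_and_unit by (smt (verit) mem_Collect_eq)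
      have su: "0 \<le> supI ?Sx \<and> supI ?Sx \<le> 1" using supI_unit[OF Sxu] .
      have tu: "0 \<le> supI ?Sy \<and> supI ?Sy \<le> 1" using supI_unit[OF Syu] .
      have "LPC \<tau> \<le> supI ?Sx"
        unfolding LPC_def[of \<tau>]
      proof (rule infI_le)
        show "supI ?Sx \<in> range (\<lambda>x. supI {luk_and (pnbhd \<tau> x B) (Gamma B (subsp (preopen \<tau>) B)) |B. True})"
          by blast
        show "\<forall>t\<in>range (\<lambda>x. supI {luk_and (pnbhd \<tau> x B) (Gamma B (subsp (preopen \<tau>) B)) |B. True}). 0 \<le> t"
        proof
          fix t assume "t \<in> range (\<lambda>x. supI {luk_and (pnbhd \<tau> x B) (Gamma B (subsp (preopen \<tau>) B)) |B. True})"
          then obtain z where t: "t = supI {luk_and (pnbhd \<tau> z B) (Gamma B (subsp (preopen \<tau>) B)) |B. True}" by blast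
          have "\<forall>a\<in>{luk_and (pnbhd \<tau> z B) (Gamma B (subsp (preopen \<tau>) B)) |B. True}. 0 \<le> a \<and> a \<le> 1"
            using pnbhd_unit[where t="\<tau>", OF ft] Gamma_unit subsp_unit[where t="preopen \<tau>", OF tP] luk_and_unit by (smt (verit) mem_Collect_eq)
          then show "0 \<le> t" unfolding t using supI_unit by blast
        qed
      qed
      then have "luk_and (luk_and (LPC \<tau>) ?I) ?O \<le> luk_and (supI ?Sx) (luk_and ?I ?O)"
        using arith3[of "LPC \<tau>" "supI ?Sx" ?I ?O] Lu su Iu Ou by blast
      also have "\<dots> \<le> supI ?Sy"
      proof (rule luk_and_supI[OF Sxu])
        show "0 \<le> supI ?Sy" using tu by blast
        show "luk_and ?I ?O \<le> 1" using Iu Ou by (simp add: luk_and_def)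
        show "\<forall>a\<in>?Sx. luk_and a (luk_and ?I ?O) \<le> supI ?Sy"
        proof
          fix a assume "a \<in> ?Sx"
          then obtain B where a: "a = luk_and (pnbhd \<tau> x B) (Gamma B (subsp (preopen \<tau>) B))" by blast
          have b: "luk_and (pnbhd \<sigma> y (f`B)) (Gamma (f`B) (subsp (preopen \<sigma>) (f`B))) \<le> supI ?Sy"
            by (rule supI_ge) (use Syu in auto)
          have "a \<le> 1" "a \<ge> 0" using Sxu \<open>a \<in> ?Sx\<close> by auto
          have "luk_and a (luk_and ?I ?O) \<le> luk_and (pnbhd \<sigma> y (f`B)) (Gamma (f`B) (subsp (preopen \<sigma>) (f`B)))"
            unfolding a y
            by (rule arith2[OF nb gm]) (use pnbhd_unit[where t="\<tau>", OF ft] pnbhd_unit[where t="\<sigma>", OF fs] Gamma_unit subsp_unit[where t="preopen \<tau>", OF tP]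
                  subsp_unit[where t="preopen \<sigma>", OF sP] Iu Ou in meson)+
          then show "luk_and a (luk_and ?I ?O) \<le> supI ?Sy" using b by linarith
        qed
      qed
      finally show "luk_and (luk_and (LPC \<tau>) ?I) ?O \<le> s" unfolding s .
    qed
  qed
qed

end
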